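(* Let $0<R\le\infty$ and let $\varphi$ be a quasiconcave function on $[0,R)$. Then: (i) there is $C>0$ such that $(S_\varphi f)^{**}(t)\le C\,S_\varphi(f^{**})(t)$ for all measurable $f$ on $(0,R)$ and all $t\in(0,R)$ if and only if $\varphi$ satisfies the $B$-condition; (ii) there is $C>0$ such that $S_\varphi(f^{**})(t)\le C\,S_\varphi f(t)$ for all measurable $f$ on $(0,R)$ and all $t\in(0,R)$ if and only if $\varphi$ satisfies the $B$-condition.
   Context: For a measurable a.e. finite function $f$ on $(0,R)$, $f^*$ is its non-increasing rearrangement, $f^*(t)=\inf\{\lambda>0: |\{x:|f(x)|>\lambda\}|\le t\}$, and $f^{**}(t)=\frac1t\int_0^t f^*(s)\,ds$. A function $\varphi\colon[0,R)\to[0,\infty)$ is quasiconcave if $\varphi(t)=0$ iff $t=0$, $\varphi$ is non-decreasing, and $\varphi(t)/t$ is non-increasing on $(0,R)$. It satisfies the $B$-condition if there is $C>0$ with $\frac1t\int_0^t \frac{ds}{\varphi(s)}\le \frac{C}{\varphi(t)}$ for all $t\in(0,R)$. $S_\varphi f(t)=\frac{1}{\varphi(t)}\sup_{0<s<t}\varphi(s)f^*(s)$, $t\in(0,R)$; $S_\varphi(f^{**})$ is $S_\varphi$ applied to the function $f^{**}$. *)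

theory Defs
  imports "HOL-Analysis.Analysis"
begin

definition openI :: "ereal \<Rightarrow> real set" where
  "openI R = {x. 0 < x \<and> ereal x < R}"

definition distfun :: "ereal \<Rightarrow> (real \<Rightarrow> ennreal) \<Rightarrow> ennreal \<Rightarrow> ennreal" where
  "distfun R g lam = emeasure lebesgue {x \<in> openI R. g x > lam}"

definition rearr :: "ereal \<Rightarrow> (real \<Rightarrow> ennreal) \<Rightarrow> real \<Rightarrow> ennreal" where
  "rearr R g t = Inf {lam. 0 < lam \<and> distfun R g lam \<le> ennreal t}"

definition dstar :: "ereal \<Rightarrow> (real \<Rightarrow> ennreal) \<Rightarrow> real \<Rightarrow> ennreal" where
  "dstar R g t = ennreal (1 / t) * (\<integral>\<^sup>+ s \<in> {0<..<t}. rearr R g s \<partial>lborel)"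

definition Sphi :: "(real \<Rightarrow> real) \<Rightarrow> ereal \<Rightarrow> (real \<Rightarrow> ennreal) \<Rightarrow> real \<Rightarrow> ennreal" where
  "Sphi \<phi> R g t = ennreal (1 / \<phi> t) * (SUP s \<in> {0<..<t}. ennreal (\<phi> s) * rearr R g s)"

definition quasiconcave :: "ereal \<Rightarrow> (real \<Rightarrow> real) \<Rightarrow> bool" where
  "quasiconcave R \<phi> \<longleftrightarrow>
     (\<forall>t. 0 \<le> t \<and> ereal t < R \<longrightarrow> 0 \<le> \<phi> t \<and> (\<phi> t = 0 \<longleftrightarrow> t = 0)) \<and>
     mono_on {t. 0 \<le> t \<and> ereal t < R} \<phi> \<and>
     antimono_on (openI R) (\<lambda>t. \<phi> t / t)"

definition B_condition :: "ereal \<Rightarrow> (real \<Rightarrow> real) \<Rightarrow> bool" where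
  "B_condition R \<phi> \<longleftrightarrow> (\<exists>C>0. \<forall>t \<in> openI R.
      ennreal (1 / t) * (\<integral>\<^sup>+ s \<in> {0<..<t}. ennreal (1 / \<phi> s) \<partial>lborel) \<le> ennreal (C / \<phi> t))"

end

theory Submission
  imports Defs
begin


lemma openI_iff: "x \<in> openI R \<longleftrightarrow> 0 < x \<and> ereal x < R" by (simp add: openI_def)

lemma openI_down: "t \<in> openI R \<Longrightarrow> 0 < s \<Longrightarrow> s \<le> t \<Longrightarrow> s \<in> openI R"
  unfolding openI_def by (metis (mono_tags) ereal_less_eq(3) mem_Collect_eq order.strict_trans1)

lemma openI_interval: "is_interval (openI R)"
proof (unfold is_interval_1, intro ballI allI impI, elim conjE)
  fix a b x assume "a \<in> openI R" "b \<in> openI R" "a \<le> x" "x \<le> b"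
  moreover have "0 < x" using \<open>a \<in> openI R\<close> \<open>a \<le> x\<close> by (simp add: openI_def)
  ultimately show "x \<in> openI R" using openI_down[of b R x] by blast
qed

lemma openI_borel: "openI R \<in> sets borel"
  using openI_interval real_interval_borel_measurable by blast

lemma openI_up: assumes "t \<in> openI R" shows "\<exists>t'. t < t' \<and> t' < 2*t \<and> t' \<in> openI R"
proof (cases R)
  case (real r)
  with assms have tr: "t < r" "0 < t" by (auto simp: openI_def)
  define t' where "t' = min (3*t/2) ((t+r)/2)"
  have "t < t'" using tr unfolding t'_def by auto
  moreover have "t' < 2*t" using tr unfolding t'_def by (simp add: min_less_iff_disj)
  moreover have "t' < r" using tr unfolding t'_def by (simp add: min_less_iff_disj)
  ultimately show ?thesis using real tr by (intro exI[of _ t']) (auto simp: openI_def)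
next
  case PInf
  have "0 < t" using assms by (simp add: openI_def)
  then have "t < 3*t/2" "3*t/2 < 2*t" "3*t/2 \<in> openI R" using PInf by (auto simp: openI_def)
  then show ?thesis by blast
next
  case MInf
  have "ereal t < R" using assms by (simp add: openI_def)
  then show ?thesis using MInf by simp
qed

lemma qc_pos: "quasiconcave R \<phi> \<Longrightarrow> t \<in> openI R \<Longrightarrow> 0 < \<phi> t"
proof -
  assume q: "quasiconcave R \<phi>" and t: "t \<in> openI R"
  have "0 \<le> t" "ereal t < R" "t \<noteq> 0" using t by (auto simp: openI_def)
  then have "0 \<le> \<phi> t" "\<phi> t \<noteq> 0" using q unfolding quasiconcave_def by blast+
  then show ?thesis by simp
qed

lemma qc_mono: "quasiconcave R \<phi> \<Longrightarrow> s \<in> openI R \<Longrightarrow> t \<in> openI R \<Longrightarrow> s \<le> t \<Longrightarrow> \<phi> s \<le> \<phi> t"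
  unfolding quasiconcave_def openI_def mono_on_def by auto

lemma qc_ratio: assumes "quasiconcave R \<phi>" "s \<in> openI R" "t \<in> openI R" "s \<le> t"
  shows "\<phi> t * s \<le> \<phi> s * t"
proof -
  have "monotone_on (openI R) (\<le>) (\<lambda>x y. y \<le> x) (\<lambda>t. \<phi> t / t)"
    using assms(1) by (simp add: quasiconcave_def)
  then have "\<phi> t / t \<le> \<phi> s / s" using assms(2-4) by (rule monotone_onD)
  moreover have "0 < s" "0 < t" using assms by (auto simp: openI_def)
  ultimately have "\<phi> t / t * (s*t) \<le> \<phi> s / s * (s*t)" by (intro mult_right_mono) auto
  moreover have "\<phi> t / t * (s*t) = \<phi> t * s" using \<open>0 < t\<close> by simp
  moreover have "\<phi> s / s * (s*t) = \<phi> s * t" using \<open>0 < s\<close> by simp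
  ultimately show ?thesis by simp
qed

lemma qc_half: assumes "quasiconcave R \<phi>" "t \<in> openI R" shows "\<phi> t \<le> 2 * \<phi> (t/2)"
proof -
  have t: "0 < t" using assms by (auto simp: openI_def)
  have "t/2 \<in> openI R" using openI_down[OF assms(2)] t by auto
  from qc_ratio[OF assms(1) this assms(2)] t have h: "\<phi> t * (t/2) \<le> \<phi> (t/2) * t" by simp
  have "\<phi> t * t = 2 * (\<phi> t * (t/2))" by simp
  also have "\<dots> \<le> 2 * (\<phi> (t/2) * t)" using h by simp
  finally have "\<phi> t * t \<le> (2 * \<phi> (t/2)) * t" by simp
  then show ?thesis using t by (rule mult_right_le_imp_le)
qed

lemma level_interval_anti:
  fixes h :: "real \<Rightarrow> 'b::linorder"
  assumes J: "is_interval J" and h: "\<And>x y. x\<in>J \<Longrightarrow> y\<in>J \<Longrightarrow> x \<le> y \<Longrightarrow> h y \<le> h x"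
  shows "is_interval {x\<in>J. c < h x}"
proof (unfold is_interval_1, intro ballI allI impI, elim conjE)
  fix a b x assume a: "a \<in> {x\<in>J. c < h x}" and b: "b \<in> {x\<in>J. c < h x}" and ax: "a \<le> x" and xb: "x \<le> b"
  have xJ: "x \<in> J" using J a b ax xb unfolding is_interval_1 by blast
  have "h b \<le> h x" using h[OF xJ _ xb] b by blast
  then show "x \<in> {x\<in>J. c < h x}" using xJ b by (auto intro: less_le_trans)
qed

lemma level_interval_mono:
  fixes h :: "real \<Rightarrow> 'b::linorder"
  assumes J: "is_interval J" and h: "\<And>x y. x\<in>J \<Longrightarrow> y\<in>J \<Longrightarrow> x \<le> y \<Longrightarrow> h x \<le> h y"
  shows "is_interval {x\<in>J. c < h x}"
proof (unfold is_interval_1, intro ballI allI impI, elim conjE)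
  fix a b x assume a: "a \<in> {x\<in>J. c < h x}" and b: "b \<in> {x\<in>J. c < h x}" and ax: "a \<le> x" and xb: "x \<le> b"
  have xJ: "x \<in> J" using J a b ax xb unfolding is_interval_1 by blast
  have "h a \<le> h x" using h[OF _ xJ ax] a by blast
  then show "x \<in> {x\<in>J. c < h x}" using xJ a by (auto intro: less_le_trans)
qed

lemma meas_of_interval_levels:
  fixes h :: "real \<Rightarrow> 'b::{linorder_topology, second_countable_topology}"
  assumes J: "is_interval J" and lv: "\<And>c. is_interval {x\<in>J. c < h x}"
  shows "h \<in> borel_measurable (restrict_space borel J)"
proof (rule borel_measurableI_greater)
  fix c
  have Jb: "J \<in> sets borel" using J real_interval_borel_measurable by blast
  have "{x\<in>J. c < h x} \<in> sets borel" using lv real_interval_borel_measurable by blast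
  then have "{x\<in>J. c < h x} \<in> sets (restrict_space borel J)" using Jb by (subst sets_restrict_space_iff) auto
  then show "{x \<in> space (restrict_space borel J). c < h x} \<in> sets (restrict_space borel J)"
    by (simp add: space_restrict_space)
qed

lemma level_borel:
  fixes h :: "real \<Rightarrow> 'b::linorder_topology"
  assumes J: "J \<in> sets borel" and h: "h \<in> borel_measurable (restrict_space borel J)"
  shows "{x\<in>J. c < h x} \<in> sets borel"
proof -
  have "h -` {c<..} \<inter> space (restrict_space borel J) \<in> sets (restrict_space borel J)"
    by (rule measurable_sets[OF h]) simp
  moreover have "h -` {c<..} \<inter> space (restrict_space borel J) = {x\<in>J. c < h x}"
    by (auto simp: space_restrict_space)
  ultimately show ?thesis using J by (simp add: sets_restrict_space_iff)
qed

lemma ind_meas: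
  assumes J: "J \<in> sets borel" and h: "h \<in> borel_measurable (restrict_space borel J)"
  shows "(\<lambda>x. h x * indicator J x :: ennreal) \<in> borel_measurable borel"
proof -
  have "(\<lambda>x. if x \<in> J then h x else 0) \<in> borel_measurable borel"
    using h J measurable_restrict_space_iff[of J borel 0 borel h] by simp
  moreover have "(\<lambda>x. h x * indicator J x) = (\<lambda>x. if x \<in> J then h x else 0)"
    by (auto simp: indicator_def)
  ultimately show ?thesis by simp
qed

lemma anti_meas:
  fixes h :: "real \<Rightarrow> 'b::{linorder_topology, second_countable_topology}"
  assumes "\<And>x y. x \<le> y \<Longrightarrow> h y \<le> h x"
  shows "h \<in> borel_measurable borel"
proof (rule borel_measurableI_greater)
  fix c
  have "is_interval {x\<in>UNIV. c < h x}" by (rule level_interval_anti) (auto intro: assms)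
  then have "{x\<in>UNIV. c < h x} \<in> sets borel" using real_interval_borel_measurable by blast
  then show "{x \<in> space borel. c < h x} \<in> sets borel" by simp
qed

lemma lebesgue_Ioo: "0 \<le> s \<Longrightarrow> emeasure lebesgue {0<..<s} = ennreal s"
  by (simp add: emeasure_completion)

lemma lebesgue_Ioc: "0 \<le> s \<Longrightarrow> emeasure lebesgue {0<..s} = ennreal s"
  by (simp add: emeasure_completion)

lemma rearr_le:
  assumes s: "0 < s" and L: "\<And>x. x \<in> openI R \<Longrightarrow> s \<le> x \<Longrightarrow> g x \<le> L"
  shows "rearr R g s \<le> L"
proof (rule dense_ge)
  fix lam assume lam: "L < lam"
  have sub: "{x \<in> openI R. lam < g x} \<subseteq> {0<..<s}"
  proof
    fix x assume "x \<in> {x \<in> openI R. lam < g x}"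
    then have x: "x \<in> openI R" "lam < g x" by auto
    have "\<not> s \<le> x"
    proof
      assume "s \<le> x" then have "g x \<le> L" using L x by blast
      then show False using lam x(2) by simp
    qed
    then show "x \<in> {0<..<s}" using x by (auto simp: openI_def)
  qed
  have "distfun R g lam \<le> emeasure lebesgue {0<..<s}"
    unfolding distfun_def by (rule emeasure_mono[OF sub]) simp
  also have "\<dots> = ennreal s" using s by (simp add: lebesgue_Ioo)
  finally have d: "distfun R g lam \<le> ennreal s" .
  have "0 < lam" using lam by (metis le_less_trans zero_le)
  then have "lam \<in> {lam. 0 < lam \<and> distfun R g lam \<le> ennreal s}" using d by auto
  then show "rearr R g s \<le> lam" unfolding rearr_def by (rule Inf_lower)
qed

lemma rearr_ge:
  assumes s: "0 \<le> s" "s < s'" and s': "s' \<in> openI R"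
    and L: "\<And>x. x \<in> openI R \<Longrightarrow> x \<le> s' \<Longrightarrow> L \<le> g x"
    and meas: "\<And>c. {x \<in> openI R. c < g x} \<in> sets borel"
  shows "L \<le> rearr R g s"
  unfolding rearr_def
proof (rule Inf_greatest)
  fix lam assume "lam \<in> {lam. 0 < lam \<and> distfun R g lam \<le> ennreal s}"
  then have d: "distfun R g lam \<le> ennreal s" by auto
  show "L \<le> lam"
  proof (rule ccontr)
    assume "\<not> L \<le> lam" then have lt: "lam < L" by simp
    have sub: "{0<..s'} \<subseteq> {x \<in> openI R. lam < g x}"
    proof
      fix x assume x: "x \<in> {0<..s'}"
      then have xI: "x \<in> openI R" using openI_down[OF s'] by auto
      have "L \<le> g x" using L xI x by auto
      then show "x \<in> {x \<in> openI R. lam < g x}" using xI lt by auto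
    qed
    have "0 < s'" using s' by (simp add: openI_def)
    then have "ennreal s' = emeasure lebesgue {0<..s'}" by (simp add: lebesgue_Ioc)
    also have "\<dots> \<le> distfun R g lam" unfolding distfun_def
      by (rule emeasure_mono[OF sub]) (intro sets_completionI_sets, simp add: meas)
    also have "\<dots> \<le> ennreal s" by (rule d)
    finally have "s' \<le> s" using s by (simp add: ennreal_le_iff)
    then show False using s by simp
  qed
qed

lemma rearr_antimono: assumes "s \<le> s'" shows "rearr R g s' \<le> rearr R g s"
  unfolding rearr_def using assms by (intro Inf_superset_mono) (auto intro: order_trans ennreal_leI)

lemma rearr_meas: "rearr R g \<in> borel_measurable borel"
  by (rule anti_meas) (rule rearr_antimono)

lemma dstar_scale:
  assumes t: "0 < t"
  shows "dstar R g t = (\<integral>\<^sup>+ x. rearr R g (t * x) * indicator {0<..<1} x \<partial>lborel)"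
proof -
  let ?F = "\<lambda>s. rearr R g s * indicator {0<..<t} s"
  have Fm: "?F \<in> borel_measurable borel"
    by (intro borel_measurable_times_ennreal rearr_meas borel_measurable_indicator) simp
  have "(\<integral>\<^sup>+ s. ?F s \<partial>lborel) = ennreal \<bar>t\<bar> * (\<integral>\<^sup>+ x. ?F (0 + t * x) \<partial>lborel)"
    using nn_integral_real_affine[OF Fm, of t 0] t by simp
  also have "(\<lambda>x. ?F (0 + t * x)) = (\<lambda>x. rearr R g (t * x) * indicator {0<..<1} x)"
  proof
    fix x
    have "0 < t * x \<longleftrightarrow> 0 < x" using t by (simp add: zero_less_mult_iff)
    moreover have "t * x < t \<longleftrightarrow> x < 1" using t by simp
    ultimately show "?F (0 + t * x) = rearr R g (t * x) * indicator {0<..<1} x"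
      by (simp add: indicator_def)
  qed
  finally have eq: "(\<integral>\<^sup>+ s. ?F s \<partial>lborel) = ennreal t * (\<integral>\<^sup>+ x. rearr R g (t * x) * indicator {0<..<1} x \<partial>lborel)"
    using t by simp
  have one: "ennreal (1/t) * ennreal t = 1" using t by (simp add: ennreal_mult[symmetric])
  have "dstar R g t = ennreal (1/t) * (\<integral>\<^sup>+ s. ?F s \<partial>lborel)" by (simp add: dstar_def)
  also have "\<dots> = (ennreal (1/t) * ennreal t) * (\<integral>\<^sup>+ x. rearr R g (t * x) * indicator {0<..<1} x \<partial>lborel)"
    by (simp add: eq mult.assoc)
  also have "\<dots> = (\<integral>\<^sup>+ x. rearr R g (t * x) * indicator {0<..<1} x \<partial>lborel)" by (simp add: one)
  finally show ?thesis .
qed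

lemma dstar_antimono: assumes "0 < u" "u \<le> t" shows "dstar R g t \<le> dstar R g u"
proof -
  have "(\<integral>\<^sup>+ x. rearr R g (t * x) * indicator {0<..<1} x \<partial>lborel) \<le> (\<integral>\<^sup>+ x. rearr R g (u * x) * indicator {0<..<1} x \<partial>lborel)"
  proof (rule nn_integral_mono)
    fix x show "rearr R g (t * x) * indicator {0<..<1} x \<le> rearr R g (u * x) * indicator {0<..<1} x"
    proof (cases "x \<in> {0<..<1}")
      case True then have "u * x \<le> t * x" using assms by (intro mult_right_mono) auto
      then show ?thesis using True by (simp add: rearr_antimono)
    qed simp
  qed
  then show ?thesis using assms by (simp add: dstar_scale)
qed

lemma rearr_le_dstar: assumes "0 < t" shows "rearr R g t \<le> dstar R g t"
proof -
  have "rearr R g t = (\<integral>\<^sup>+ x. rearr R g t * indicator {0<..<1::real} x \<partial>lborel)"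
    by (subst nn_integral_cmult_indicator) auto
  also have "\<dots> \<le> (\<integral>\<^sup>+ x. rearr R g (t * x) * indicator {0<..<1} x \<partial>lborel)"
  proof (rule nn_integral_mono)
    fix x show "rearr R g t * indicator {0<..<1} x \<le> rearr R g (t * x) * indicator {0<..<1} x"
    proof (cases "x \<in> {0<..<1}")
      case True then have "t * x \<le> t*1" using assms by (intro mult_left_mono) auto
      then show ?thesis using True by (simp add: rearr_antimono)
    qed simp
  qed
  finally show ?thesis using assms by (simp add: dstar_scale)
qed

lemma dstar_level: "{x \<in> openI R. c < dstar R g x} \<in> sets borel"
proof -
  have "is_interval {x \<in> openI R. c < dstar R g x}"
    by (rule level_interval_anti[OF openI_interval]) (auto simp: openI_def intro: dstar_antimono)
  then show ?thesis using real_interval_borel_measurable by blast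
qed

lemma dstar_rearr_le: assumes "t \<in> openI R" shows "rearr R (dstar R g) t \<le> dstar R g t"
proof (rule rearr_le)
  show "0 < t" using assms by (simp add: openI_def)
  then show "\<And>x. x \<in> openI R \<Longrightarrow> t \<le> x \<Longrightarrow> dstar R g x \<le> dstar R g t"
    by (rule dstar_antimono)
qed

lemma dstar_rearr_ge: assumes "t \<in> openI R" shows "dstar R g t \<le> rearr R (dstar R g) (t/2)"
proof (rule rearr_ge[OF _ _ assms])
  have t: "0 < t" using assms by (simp add: openI_def)
  then show "0 \<le> t/2" "t/2 < t" by auto
  show "\<And>x. x \<in> openI R \<Longrightarrow> x \<le> t \<Longrightarrow> dstar R g t \<le> dstar R g x"
    by (rule dstar_antimono) (auto simp: openI_def)
  show "\<And>c. {x \<in> openI R. c < dstar R g x} \<in> sets borel" by (rule dstar_level)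
qed

lemma Sphi_level: assumes q: "quasiconcave R \<phi>" shows "{x \<in> openI R. c < Sphi \<phi> R g x} \<in> sets borel"
proof -
  let ?M = "\<lambda>t. SUP s\<in>{0<..<t}. ennreal (\<phi> s) * rearr R g s"
  have Mm: "?M \<in> borel_measurable (restrict_space borel (openI R))"
    by (rule meas_of_interval_levels[OF openI_interval], rule level_interval_mono[OF openI_interval])
       (auto intro!: SUP_subset_mono)
  have Pm: "(\<lambda>t. ennreal (1/\<phi> t)) \<in> borel_measurable (restrict_space borel (openI R))"
  proof (rule meas_of_interval_levels[OF openI_interval], rule level_interval_anti[OF openI_interval])
    fix x y assume xy: "x \<in> openI R" "y \<in> openI R" "x \<le> y"
    then have "\<phi> x \<le> \<phi> y" "0 < \<phi> x" using q qc_mono qc_pos by auto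
    then show "ennreal (1/\<phi> y) \<le> ennreal (1/\<phi> x)" by (intro ennreal_leI divide_left_mono) auto
  qed
  have "Sphi \<phi> R g \<in> borel_measurable (restrict_space borel (openI R))"
    unfolding Sphi_def[abs_def] using Pm Mm by (rule borel_measurable_times_ennreal)
  then show ?thesis by (rule level_borel[OF openI_borel])
qed



lemma inv_phi_meas:
  assumes q: "quasiconcave R \<phi>" and J: "is_interval J" "J \<subseteq> openI R"
  shows "(\<lambda>u. ennreal (1/\<phi> u) * indicator J u) \<in> borel_measurable borel"
proof (rule ind_meas)
  show "J \<in> sets borel" using J real_interval_borel_measurable by blast
  show "(\<lambda>u. ennreal (1/\<phi> u)) \<in> borel_measurable (restrict_space borel J)"
  proof (rule meas_of_interval_levels[OF J(1)], rule level_interval_anti[OF J(1)])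
    fix x y assume xy: "x \<in> J" "y \<in> J" "x \<le> y"
    then have xI: "x \<in> openI R" and yI: "y \<in> openI R" using J(2) by auto
    have "\<phi> x \<le> \<phi> y" using qc_mono[OF q xI yI xy(3)] .
    moreover have "0 < \<phi> x" using qc_pos[OF q xI] .
    ultimately show "ennreal (1/\<phi> y) \<le> ennreal (1/\<phi> x)" by (intro ennreal_leI divide_left_mono) auto
  qed
qed

lemma ennreal_inv_cancel: "0 < (a::real) \<Longrightarrow> ennreal (1/a) * ennreal a = 1"
  by (simp add: ennreal_mult[symmetric])

lemma partii_fwd:
  assumes q: "quasiconcave R \<phi>" and C: "0 < C"
    and B: "\<forall>t \<in> openI R. ennreal (1 / t) * (\<integral>\<^sup>+ s \<in> {0<..<t}. ennreal (1 / \<phi> s) \<partial>lborel) \<le> ennreal (C / \<phi> t)"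
    and t: "t \<in> openI R"
  shows "Sphi \<phi> R (dstar R g) t \<le> ennreal C * Sphi \<phi> R g t"
proof -
  define M where "M = (SUP s\<in>{0<..<t}. ennreal (\<phi> s) * rearr R g s)"
  have key: "ennreal (\<phi> s) * rearr R (dstar R g) s \<le> ennreal C * M" if s: "s \<in> {0<..<t}" for s
  proof -
    have sI: "s \<in> openI R" using s openI_down[OF t] by auto
    have s0: "0 < s" using s by simp
    have ps: "0 < \<phi> s" using q sI by (rule qc_pos)
    have gsb: "rearr R g u * indicator {0<..<s} u \<le> M * (ennreal (1/\<phi> u) * indicator {0<..<s} u)" for u
    proof (cases "u \<in> {0<..<s}")
      case True
      then have uI: "u \<in> openI R" using openI_down[OF sI] by auto
      have pu: "0 < \<phi> u" using q uI by (rule qc_pos)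
      have "u \<in> {0<..<t}" using True s by auto
      then have "ennreal (\<phi> u) * rearr R g u \<le> M" unfolding M_def by (rule SUP_upper)
      then have "ennreal (1/\<phi> u) * (ennreal (\<phi> u) * rearr R g u) \<le> ennreal (1/\<phi> u) * M"
        by (rule mult_left_mono) simp
      moreover have "ennreal (1/\<phi> u) * (ennreal (\<phi> u) * rearr R g u) = rearr R g u"
        using ennreal_inv_cancel[OF pu] by (simp add: mult.assoc[symmetric])
      ultimately show ?thesis using True by (simp add: mult.commute)
    qed simp
    have "rearr R (dstar R g) s \<le> dstar R g s" by (rule dstar_rearr_le[OF sI])
    also have "dstar R g s = ennreal (1/s) * (\<integral>\<^sup>+ u. rearr R g u * indicator {0<..<s} u \<partial>lborel)"
      by (simp add: dstar_def)
    also have "\<dots> \<le> ennreal (1/s) * (\<integral>\<^sup>+ u. M * (ennreal (1/\<phi> u) * indicator {0<..<s} u) \<partial>lborel)"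
      by (intro mult_left_mono nn_integral_mono gsb) simp
    also have "(\<integral>\<^sup>+ u. M * (ennreal (1/\<phi> u) * indicator {0<..<s} u) \<partial>lborel)
        = M * (\<integral>\<^sup>+ u. ennreal (1/\<phi> u) * indicator {0<..<s} u \<partial>lborel)"
    proof -
      have sub: "{0<..<s} \<subseteq> openI R" using openI_down[OF sI] by auto
      have "is_interval {0<..<s}" by (auto simp: is_interval_1)
      from inv_phi_meas[OF q this sub]
      have meas: "(\<lambda>u. ennreal (1/\<phi> u) * indicator {0<..<s} u) \<in> borel_measurable lborel" by simp
      show ?thesis using nn_integral_cmult[OF meas, of M] by simp
    qed
    also have "ennreal (1/s) * (M * (\<integral>\<^sup>+ u. ennreal (1/\<phi> u) * indicator {0<..<s} u \<partial>lborel))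
        = M * (ennreal (1/s) * (\<integral>\<^sup>+ u. ennreal (1/\<phi> u) * indicator {0<..<s} u \<partial>lborel))"
      by (simp add: ac_simps)
    also have "\<dots> \<le> M * ennreal (C / \<phi> s)"
      using B sI by (intro mult_left_mono) auto
    finally have "ennreal (\<phi> s) * rearr R (dstar R g) s \<le> ennreal (\<phi> s) * (M * ennreal (C / \<phi> s))"
      by (rule mult_left_mono) simp
    also have "\<dots> = M * (ennreal (\<phi> s) * ennreal (C / \<phi> s))" by (simp add: ac_simps)
    also have "ennreal (\<phi> s) * ennreal (C / \<phi> s) = ennreal C"
      using ps C by (simp add: ennreal_mult[symmetric])
    finally show ?thesis by (simp add: mult.commute)
  qed
  have "Sphi \<phi> R (dstar R g) t = ennreal (1/\<phi> t) * (SUP s\<in>{0<..<t}. ennreal (\<phi> s) * rearr R (dstar R g) s)"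
    by (simp add: Sphi_def)
  also have "\<dots> \<le> ennreal (1/\<phi> t) * (ennreal C * M)"
    by (intro mult_left_mono SUP_least key) auto
  also have "\<dots> = ennreal C * Sphi \<phi> R g t" by (simp add: Sphi_def M_def ac_simps)
  finally show ?thesis .
qed



lemma parti_fwd:
  assumes q: "quasiconcave R \<phi>" and C: "0 < C"
    and B: "\<forall>t \<in> openI R. ennreal (1 / t) * (\<integral>\<^sup>+ s \<in> {0<..<t}. ennreal (1 / \<phi> s) \<partial>lborel) \<le> ennreal (C / \<phi> t)"
    and t: "t \<in> openI R"
  shows "dstar R (Sphi \<phi> R g) t \<le> ennreal (4*C) * Sphi \<phi> R (dstar R g) t"
proof -
  have t0: "0 < t" using t by (simp add: openI_def)
  have pt: "0 < \<phi> t" using qc_pos[OF q t] .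
  define P where "P = (SUP u\<in>{0<..<t}. ennreal (\<phi> u) * dstar R g u)"
  define Q where "Q = (SUP u\<in>{0<..<t}. ennreal (\<phi> u) * rearr R (dstar R g) u)"
  have PQ: "P \<le> 2 * Q"
    unfolding P_def
  proof (rule SUP_least)
    fix u assume u: "u \<in> {0<..<t}"
    have uI: "u \<in> openI R" using u openI_down[OF t] by auto
    have u2I: "u/2 \<in> openI R" using u openI_down[OF uI] by auto
    have "ennreal (\<phi> u) \<le> ennreal (2 * \<phi> (u/2))" using qc_half[OF q uI] by (rule ennreal_leI)
    moreover have "dstar R g u \<le> rearr R (dstar R g) (u/2)" by (rule dstar_rearr_ge[OF uI])
    ultimately have "ennreal (\<phi> u) * dstar R g u \<le> ennreal (2 * \<phi> (u/2)) * rearr R (dstar R g) (u/2)"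
      by (rule mult_mono) auto
    also have "\<dots> = 2 * (ennreal (\<phi> (u/2)) * rearr R (dstar R g) (u/2))"
      by (simp add: ennreal_mult' mult.assoc)
    also have "\<dots> \<le> 2 * Q" unfolding Q_def using u by (intro mult_left_mono SUP_upper) auto
    finally show "ennreal (\<phi> u) * dstar R g u \<le> 2 * Q" .
  qed
  have bnd: "rearr R (Sphi \<phi> R g) u \<le> 2 * P * ennreal (1/\<phi> u)" if u: "u \<in> {0<..<t}" for u
  proof -
    have uI: "u \<in> openI R" using u openI_down[OF t] by auto
    have pu: "0 < \<phi> u" using qc_pos[OF q uI] .
    define Mu where "Mu = (SUP s\<in>{0<..<u}. ennreal (\<phi> s) * rearr R g s)"
    have SMu: "Sphi \<phi> R g u = ennreal (1/\<phi> u) * Mu" by (simp add: Sphi_def Mu_def)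
    have b1: "Sphi \<phi> R g x \<le> Sphi \<phi> R g u + rearr R g u" if x: "x \<in> openI R" "u \<le> x" for x
    proof -
      have px: "0 < \<phi> x" using qc_pos[OF q x(1)] .
      have "Sphi \<phi> R g x = (SUP s\<in>{0<..<x}. ennreal (1/\<phi> x) * (ennreal (\<phi> s) * rearr R g s))"
        by (simp add: Sphi_def SUP_mult_left_ennreal)
      also have "\<dots> \<le> Sphi \<phi> R g u + rearr R g u"
      proof (rule SUP_least)
        fix s assume s: "s \<in> {0<..<x}"
        have sI: "s \<in> openI R" using s openI_down[OF x(1)] by auto
        show "ennreal (1/\<phi> x) * (ennreal (\<phi> s) * rearr R g s) \<le> Sphi \<phi> R g u + rearr R g u"
        proof (cases "s < u")
          case True
          have "ennreal (1/\<phi> x) \<le> ennreal (1/\<phi> u)"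
            using qc_mono[OF q uI x] pu by (intro ennreal_leI divide_left_mono) auto
          then have "ennreal (1/\<phi> x) * (ennreal (\<phi> s) * rearr R g s) \<le> ennreal (1/\<phi> u) * (ennreal (\<phi> s) * rearr R g s)"
            by (rule mult_right_mono) simp
          also have "\<dots> \<le> ennreal (1/\<phi> u) * Mu" unfolding Mu_def using True s by (intro mult_left_mono SUP_upper) auto
          also have "\<dots> = Sphi \<phi> R g u" by (simp add: SMu)
          finally show ?thesis by (rule add_increasing2[rotated]) simp
        next
          case False
          have ps: "0 < \<phi> s" using qc_pos[OF q sI] .
          have "\<phi> s \<le> \<phi> x" using qc_mono[OF q sI x(1)] s by auto
          then have le1: "\<phi> s / \<phi> x \<le> 1" using px by simp
          have e: "ennreal (1/\<phi> x) * ennreal (\<phi> s) = ennreal (\<phi> s / \<phi> x)"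
            using px ps by (simp add: ennreal_mult[symmetric])
          have "ennreal (1/\<phi> x) * ennreal (\<phi> s) \<le> 1" unfolding e using le1 by (simp add: ennreal_le_1)
          moreover have "rearr R g s \<le> rearr R g u" using False by (intro rearr_antimono) simp
          ultimately have "(ennreal (1/\<phi> x) * ennreal (\<phi> s)) * rearr R g s \<le> 1 * rearr R g u"
            by (rule mult_mono) auto
          then have "ennreal (1/\<phi> x) * (ennreal (\<phi> s) * rearr R g s) \<le> rearr R g u"
            by (simp add: mult.assoc)
          then show ?thesis by (rule add_increasing[rotated]) simp
        qed
      qed
      finally show ?thesis .
    qed
    have h0: "rearr R (Sphi \<phi> R g) u \<le> Sphi \<phi> R g u + rearr R g u"
      using u b1 by (intro rearr_le) auto
    have h1: "Sphi \<phi> R g u \<le> ennreal (1/\<phi> u) * P"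
    proof -
      have "Mu \<le> P" unfolding Mu_def P_def
      proof (rule SUP_mono)
        fix s assume s: "s \<in> {0<..<u}"
        then have "rearr R g s \<le> dstar R g s" by (intro rearr_le_dstar) simp
        then show "\<exists>m\<in>{0<..<t}. ennreal (\<phi> s) * rearr R g s \<le> ennreal (\<phi> m) * dstar R g m"
          using s u by (intro bexI[of _ s] mult_left_mono) auto
      qed
      then show ?thesis unfolding SMu by (rule mult_left_mono) simp
    qed
    have h2: "rearr R g u \<le> ennreal (1/\<phi> u) * P"
    proof -
      have "ennreal (\<phi> u) * dstar R g u \<le> P" unfolding P_def using u by (rule SUP_upper)
      then have "ennreal (1/\<phi> u) * (ennreal (\<phi> u) * dstar R g u) \<le> ennreal (1/\<phi> u) * P"
        by (rule mult_left_mono) simp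
      then have "dstar R g u \<le> ennreal (1/\<phi> u) * P"
        using ennreal_inv_cancel[OF pu] by (simp add: mult.assoc[symmetric])
      then show ?thesis using rearr_le_dstar[of u R g] u by (auto intro: order_trans)
    qed
    have "rearr R (Sphi \<phi> R g) u \<le> ennreal (1/\<phi> u) * P + ennreal (1/\<phi> u) * P"
      using h0 add_mono[OF h1 h2] by (rule order_trans)
    also have "\<dots> = 2 * P * ennreal (1/\<phi> u)" by (subst mult_2[symmetric]) (simp add: ac_simps)
    finally show ?thesis .
  qed
  have sub: "{0<..<t} \<subseteq> openI R" using openI_down[OF t] by auto
  have "is_interval {0<..<t}" by (auto simp: is_interval_1)
  from inv_phi_meas[OF q this sub]
  have meas: "(\<lambda>u. ennreal (1/\<phi> u) * indicator {0<..<t} u) \<in> borel_measurable lborel" by simp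
  have "dstar R (Sphi \<phi> R g) t = ennreal (1/t) * (\<integral>\<^sup>+ u. rearr R (Sphi \<phi> R g) u * indicator {0<..<t} u \<partial>lborel)"
    by (simp add: dstar_def)
  also have "\<dots> \<le> ennreal (1/t) * (\<integral>\<^sup>+ u. (2 * P) * (ennreal (1/\<phi> u) * indicator {0<..<t} u) \<partial>lborel)"
  proof (intro mult_left_mono nn_integral_mono)
    fix u show "rearr R (Sphi \<phi> R g) u * indicator {0<..<t} u \<le> (2 * P) * (ennreal (1/\<phi> u) * indicator {0<..<t} u)"
      using bnd[of u] by (cases "u \<in> {0<..<t}") (auto simp: mult.assoc)
  qed simp
  also have "\<dots> = (2 * P) * (ennreal (1/t) * (\<integral>\<^sup>+ u. ennreal (1/\<phi> u) * indicator {0<..<t} u \<partial>lborel))"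
    using nn_integral_cmult[OF meas, of "2*P"] by (simp add: ac_simps)
  also have "\<dots> \<le> (2 * P) * ennreal (C / \<phi> t)"
    using B t by (intro mult_left_mono) auto
  also have "\<dots> \<le> (2 * (2 * Q)) * ennreal (C / \<phi> t)"
    by (intro mult_right_mono mult_left_mono PQ) auto
  also have "\<dots> = ennreal (4*C) * Sphi \<phi> R (dstar R g) t"
  proof -
    have e1: "ennreal (C/\<phi> t) = ennreal C * ennreal (1/\<phi> t)" using C pt by (simp add: ennreal_mult[symmetric])
    have e2: "ennreal (4*C) = 4 * ennreal C" by (simp add: ennreal_mult')
    have e3: "2 * (2 * Q) = 4 * Q" by (simp add: mult.assoc[symmetric])
    have e4: "ennreal (C*4) = 4 * ennreal C" by (simp add: ennreal_mult'' mult.commute)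
    show ?thesis by (simp add: Sphi_def Q_def[symmetric] e1 e2 e3 e4 ac_simps)
  qed
  finally show ?thesis .
qed



lemma partii_rev:
  assumes q: "quasiconcave R \<phi>" and C: "0 < C"
    and H: "\<forall>f :: real \<Rightarrow> real. f \<in> borel_measurable (restrict_space lebesgue (openI R)) \<longrightarrow>
            (\<forall>t \<in> openI R. Sphi \<phi> R (dstar R (\<lambda>x. ennreal \<bar>f x\<bar>)) t \<le> ennreal C * Sphi \<phi> R (\<lambda>x. ennreal \<bar>f x\<bar>) t)"
  shows "B_condition R \<phi>"
proof -
  define f where "f = (\<lambda>x. 1 / \<phi> (x/2))"
  have h2I: "x/2 \<in> openI R" if "x \<in> openI R" for x using openI_down[OF that] that by (auto simp: openI_def)
  have fI: "0 < f x" if "x \<in> openI R" for x using qc_pos[OF q h2I[OF that]] by (simp add: f_def)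
  have fanti: "f y \<le> f x" if "x \<in> openI R" "y \<in> openI R" "x \<le> y" for x y
  proof -
    have "\<phi> (x/2) \<le> \<phi> (y/2)" using qc_mono[OF q h2I[OF that(1)] h2I[OF that(2)]] that(3) by simp
    moreover have "0 < \<phi> (x/2)" using qc_pos[OF q h2I[OF that(1)]] .
    ultimately show ?thesis unfolding f_def by (intro divide_left_mono) auto
  qed
  have fm: "f \<in> borel_measurable (restrict_space lebesgue (openI R))"
  proof (rule borel_measurableI_greater)
    fix c
    have "is_interval {x\<in>openI R. c < f x}" by (rule level_interval_anti[OF openI_interval fanti])
    then have "{x\<in>openI R. c < f x} \<in> sets borel" using real_interval_borel_measurable by blast
    then have "{x\<in>openI R. c < f x} \<in> sets lebesgue" by (intro sets_completionI_sets) simp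
    moreover have "openI R \<in> sets lebesgue" using openI_borel by (intro sets_completionI_sets) simp
    ultimately show "{x \<in> space (restrict_space lebesgue (openI R)). c < f x} \<in> sets (restrict_space lebesgue (openI R))"
      by (simp add: sets_restrict_space_iff space_restrict_space)
  qed
  define g where "g = (\<lambda>x. ennreal \<bar>f x\<bar>)"
  have gI: "g x = ennreal (f x)" if "x \<in> openI R" for x using fI[OF that] by (simp add: g_def)
  have glev: "{x\<in>openI R. c < g x} \<in> sets borel" for c
  proof -
    have "is_interval {x\<in>openI R. c < g x}"
      by (rule level_interval_anti[OF openI_interval]) (simp add: gI ennreal_leI fanti)
    then show ?thesis using real_interval_borel_measurable by blast
  qed
  have gs_up: "rearr R g u \<le> ennreal (2/\<phi> u)" if u: "u \<in> openI R" for u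
  proof (rule rearr_le)
    show "0 < u" using u by (simp add: openI_def)
    fix x assume x: "x \<in> openI R" "u \<le> x"
    have "g x \<le> ennreal (f u)" using gI[OF x(1)] fanti[OF u x(1) x(2)] by (simp add: ennreal_leI)
    also have "f u \<le> 2 / \<phi> u"
    proof -
      have "f u = 2 / (2 * \<phi> (u/2))" by (simp add: f_def)
      also have "\<dots> \<le> 2 / \<phi> u" using qc_half[OF q u] qc_pos[OF q u] by (intro divide_left_mono) auto
      finally show ?thesis .
    qed
    then have "ennreal (f u) \<le> ennreal (2 / \<phi> u)" by (rule ennreal_leI)
    finally show "g x \<le> ennreal (2/\<phi> u)" .
  qed
  have gs_low: "ennreal (1/\<phi> u) \<le> rearr R g u" if u: "u \<in> openI R" for u
  proof -
    obtain u' where u': "u < u'" "u' < 2*u" "u' \<in> openI R" using openI_up[OF u] by blast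
    show ?thesis
    proof (rule rearr_ge[OF _ u'(1) u'(3) _ glev])
      show "0 \<le> u" using u by (simp add: openI_def)
      fix x assume x: "x \<in> openI R" "x \<le> u'"
      have "\<phi> (x/2) \<le> \<phi> u" using qc_mono[OF q h2I[OF x(1)] u] x u' by simp
      then have "1/\<phi> u \<le> f x" unfolding f_def using qc_pos[OF q h2I[OF x(1)]] by (intro divide_left_mono) auto
      then show "ennreal (1/\<phi> u) \<le> g x" using gI[OF x(1)] by (simp add: ennreal_leI)
    qed
  qed
  have S_up: "Sphi \<phi> R g t \<le> ennreal (2/\<phi> t)" if t: "t \<in> openI R" for t
  proof -
    have "(SUP s\<in>{0<..<t}. ennreal (\<phi> s) * rearr R g s) \<le> 2"
    proof (rule SUP_least)
      fix s assume s: "s \<in> {0<..<t}"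
      have sI: "s \<in> openI R" using s openI_down[OF t] by auto
      have "ennreal (\<phi> s) * rearr R g s \<le> ennreal (\<phi> s) * ennreal (2/\<phi> s)"
        by (intro mult_left_mono gs_up sI) simp
      also have "\<dots> = 2" using qc_pos[OF q sI] by (simp add: ennreal_mult[symmetric])
      finally show "ennreal (\<phi> s) * rearr R g s \<le> 2" .
    qed
    then have "Sphi \<phi> R g t \<le> ennreal (1/\<phi> t) * 2" unfolding Sphi_def by (rule mult_left_mono) simp
    also have "\<dots> = ennreal (2/\<phi> t)" using qc_pos[OF q t] ennreal_mult[of "1/\<phi> t" 2] by simp
    finally show ?thesis .
  qed
  show ?thesis unfolding B_condition_def
  proof (intro exI[of _ "4*C"] conjI ballI)
    show "0 < 4*C" using C by simp
    fix t assume t: "t \<in> openI R"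
    have t0: "0 < t" using t by (simp add: openI_def)
    have pt: "0 < \<phi> t" using qc_pos[OF q t] .
    have t2: "t/2 \<in> openI R" using h2I[OF t] .
    have pt2: "0 < \<phi> (t/2)" using qc_pos[OF q t2] .
    define X where "X = ennreal (1 / t) * (\<integral>\<^sup>+ s \<in> {0<..<t}. ennreal (1 / \<phi> s) \<partial>lborel)"
    have "X \<le> dstar R g t" unfolding X_def dstar_def
    proof (intro mult_left_mono nn_integral_mono)
      fix s show "ennreal (1 / \<phi> s) * indicator {0<..<t} s \<le> rearr R g s * indicator {0<..<t} s"
      proof (cases "s \<in> {0<..<t}")
        case True
        then have "s \<in> openI R" using openI_down[OF t] by auto
        then show ?thesis using True gs_low by simp
      qed simp
    qed simp
    also have "\<dots> \<le> rearr R (dstar R g) (t/2)" by (rule dstar_rearr_ge[OF t])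
    finally have X1: "X \<le> rearr R (dstar R g) (t/2)" .
    have "ennreal (1/\<phi> t) * (ennreal (\<phi> (t/2)) * X) \<le> ennreal (1/\<phi> t) * (ennreal (\<phi> (t/2)) * rearr R (dstar R g) (t/2))"
      using X1 by (intro mult_left_mono) auto
    also have "\<dots> \<le> Sphi \<phi> R (dstar R g) t" unfolding Sphi_def using t0
      by (intro mult_left_mono SUP_upper) auto
    also have "\<dots> \<le> ennreal C * Sphi \<phi> R g t" using H fm t unfolding g_def by blast
    also have "\<dots> \<le> ennreal C * ennreal (2/\<phi> t)" by (intro mult_left_mono S_up t) simp
    finally have K: "ennreal (\<phi> (t/2) / \<phi> t) * X \<le> ennreal (2*C/\<phi> t)"
      using pt pt2 C by (simp add: ennreal_mult[symmetric] mult.assoc[symmetric] mult.commute[of C 2])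
    have "X = ennreal (\<phi> t / \<phi> (t/2)) * (ennreal (\<phi> (t/2) / \<phi> t) * X)"
      using pt pt2 by (simp add: mult.assoc[symmetric] ennreal_mult[symmetric])
    also have "\<dots> \<le> ennreal (\<phi> t / \<phi> (t/2)) * ennreal (2*C/\<phi> t)"
      using K by (rule mult_left_mono) simp
    also have "\<dots> = ennreal (2*C/\<phi> (t/2))"
      using pt pt2 C by (simp add: ennreal_mult[symmetric])
    also have "\<dots> \<le> ennreal (4*C/\<phi> t)"
    proof (rule ennreal_leI)
      have "2*C/\<phi> (t/2) = 4*C/(2*\<phi> (t/2))" by simp
      also have "\<dots> \<le> 4*C/\<phi> t" using qc_half[OF q t] pt C by (intro divide_left_mono) auto
      finally show "2*C/\<phi> (t/2) \<le> 4*C/\<phi> t" .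
    qed
    finally show "ennreal (1 / t) * (\<integral>\<^sup>+ s \<in> {0<..<t}. ennreal (1 / \<phi> s) \<partial>lborel) \<le> ennreal (4*C / \<phi> t)"
      unfolding X_def .
  qed
qed



lemma parti_rev_a:
  assumes q: "quasiconcave R \<phi>" and C: "0 < C"
    and H: "\<forall>f :: real \<Rightarrow> real. f \<in> borel_measurable (restrict_space lebesgue (openI R)) \<longrightarrow>
            (\<forall>t \<in> openI R. dstar R (Sphi \<phi> R (\<lambda>x. ennreal \<bar>f x\<bar>)) t \<le> ennreal C * Sphi \<phi> R (dstar R (\<lambda>x. ennreal \<bar>f x\<bar>)) t)"
    and t: "t \<in> openI R" and a: "0 < a" "a < t"
  shows "ennreal (1/t) * (\<integral>\<^sup>+ x. ennreal (1/\<phi> x) * indicator {a<..<t} x \<partial>lborel) \<le> ennreal (4*C/\<phi> t)"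
proof -
  have t0: "0 < t" using t by (simp add: openI_def)
  have aI: "a \<in> openI R" using openI_down[OF t a(1)] a by simp
  have pa: "0 < \<phi> a" using qc_pos[OF q aI] .
  have pt: "0 < \<phi> t" using qc_pos[OF q t] .
  define f where "f = (indicator {0<..<a} :: real \<Rightarrow> real)"
  have "{0<..<a} \<in> sets lebesgue" by (intro sets_completionI_sets) simp
  then have "f \<in> borel_measurable lebesgue" unfolding f_def by (rule borel_measurable_indicator)
  then have fm: "f \<in> borel_measurable (restrict_space lebesgue (openI R))" by (rule measurable_restrict_space1)
  define g where "g = (\<lambda>x. ennreal \<bar>f x\<bar>)"
  have g_eq: "g = indicator {0<..<a}" by (auto simp: g_def f_def indicator_def fun_eq_iff)
  have "g \<in> borel_measurable borel" unfolding g_eq by (rule borel_measurable_indicator) simp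
  then have gmeasR: "g \<in> borel_measurable (restrict_space borel (openI R))" by (rule measurable_restrict_space1)
  have glev: "{x\<in>openI R. c < g x} \<in> sets borel" for c by (rule level_borel[OF openI_borel gmeasR])
  have gs1: "rearr R g u \<le> 1" if "0 < u" for u
    using that by (intro rearr_le) (auto simp: g_eq indicator_def)
  have gs0: "rearr R g u = 0" if "a \<le> u" for u
  proof -
    have "rearr R g u \<le> 0" using that a by (intro rearr_le) (auto simp: g_eq indicator_def)
    then show ?thesis by simp
  qed
  have gs_ge: "1 \<le> rearr R g u" if u: "0 \<le> u" "u < a" for u
  proof (rule rearr_ge[OF u(1) _ _ _ glev])
    show "u < (u+a)/2" using u by simp
    show "(u+a)/2 \<in> openI R" using u a by (intro openI_down[OF t]) auto
    fix x assume "x \<in> openI R" "x \<le> (u+a)/2"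
    then show "1 \<le> g x" using u by (auto simp: g_eq indicator_def openI_def)
  qed
  have S_low: "ennreal (\<phi> a / (2 * \<phi> s')) \<le> Sphi \<phi> R g x"
    if x: "x \<in> openI R" "x \<le> s'" and s': "a \<le> s'" "s' \<in> openI R" for x s'
  proof -
    have x0: "0 < x" using x by (simp add: openI_def)
    have px: "0 < \<phi> x" using qc_pos[OF q x(1)] .
    have ps': "0 < \<phi> s'" using qc_pos[OF q s'(2)] .
    define m where "m = min x a / 2"
    have m: "0 < m" "m < x" "m < a" using x0 a unfolding m_def by auto
    have mI: "m \<in> openI R" using openI_down[OF x(1) m(1)] m by simp
    have pm: "0 < \<phi> m" using qc_pos[OF q mI] .
    have real: "\<phi> a / (2 * \<phi> s') \<le> \<phi> m / \<phi> x"
    proof (cases "x \<le> a")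
      case True
      then have mx: "m = x/2" by (simp add: m_def)
      have "\<phi> a \<le> \<phi> s'" using qc_mono[OF q aI s'(2) s'(1)] .
      then have "\<phi> a / (2 * \<phi> s') \<le> \<phi> s' / (2 * \<phi> s')" using ps' by (intro divide_right_mono) auto
      also have "\<dots> = 1/2" using ps' by simp
      also have "\<dots> = (\<phi> x / 2) / \<phi> x" using px by simp
      also have "\<dots> \<le> \<phi> m / \<phi> x" unfolding mx using qc_half[OF q x(1)] px by (intro divide_right_mono) auto
      finally show ?thesis .
    next
      case False
      then have ma: "m = a/2" by (simp add: m_def)
      have "\<phi> x \<le> \<phi> s'" using qc_mono[OF q x(1) s'(2) x(2)] .
      then have "\<phi> a / (2 * \<phi> s') \<le> \<phi> a / (2 * \<phi> x)" using px pa by (intro divide_left_mono) auto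
      also have "\<dots> = (\<phi> a / 2) / \<phi> x" by simp
      also have "\<dots> \<le> \<phi> m / \<phi> x" unfolding ma using qc_half[OF q aI] px by (intro divide_right_mono) auto
      finally show ?thesis .
    qed
    have "ennreal (\<phi> a / (2 * \<phi> s')) \<le> ennreal (\<phi> m / \<phi> x)" using real by (rule ennreal_leI)
    also have "\<dots> = ennreal (1/\<phi> x) * (ennreal (\<phi> m) * 1)" using px pm by (simp add: ennreal_mult[symmetric])
    also have "\<dots> \<le> ennreal (1/\<phi> x) * (ennreal (\<phi> m) * rearr R g m)"
      using gs_ge[of m] m by (intro mult_left_mono) auto
    also have "\<dots> \<le> Sphi \<phi> R g x" unfolding Sphi_def using m by (intro mult_left_mono SUP_upper) auto
    finally show ?thesis .
  qed
  have Sg_low2: "ennreal (\<phi> a / (4 * \<phi> u)) \<le> rearr R (Sphi \<phi> R g) u" if u: "u \<in> openI R" "a \<le> u" for u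
  proof -
    obtain u' where u': "u < u'" "u' < 2*u" "u' \<in> openI R" using openI_up[OF u(1)] by blast
    have u0: "0 < u" using u by (simp add: openI_def)
    have pu: "0 < \<phi> u" using qc_pos[OF q u(1)] .
    have u'2: "u'/2 \<in> openI R" using openI_down[OF u'(3)] u' u0 by auto
    have "\<phi> u' \<le> 2 * \<phi> (u'/2)" using qc_half[OF q u'(3)] .
    also have "\<phi> (u'/2) \<le> \<phi> u" using qc_mono[OF q u'2 u(1)] u' by simp
    finally have "2 * \<phi> u' \<le> 4 * \<phi> u" by simp
    then have "\<phi> a / (4 * \<phi> u) \<le> \<phi> a / (2 * \<phi> u')" using pa qc_pos[OF q u'(3)] by (intro divide_left_mono) auto
    then have "ennreal (\<phi> a / (4 * \<phi> u)) \<le> ennreal (\<phi> a / (2 * \<phi> u'))" by (rule ennreal_leI)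
    also have "\<dots> \<le> rearr R (Sphi \<phi> R g) u"
    proof (rule rearr_ge[OF _ u'(1) u'(3)])
      show "0 \<le> u" using u0 by simp
      show "\<And>x. x \<in> openI R \<Longrightarrow> x \<le> u' \<Longrightarrow> ennreal (\<phi> a / (2 * \<phi> u')) \<le> Sphi \<phi> R g x"
        using u u' by (intro S_low) auto
      show "\<And>c. {x \<in> openI R. c < Sphi \<phi> R g x} \<in> sets borel" by (rule Sphi_level[OF q])
    qed
    finally show ?thesis .
  qed
  define Ia where "Ia = (\<integral>\<^sup>+ x. ennreal (1/\<phi> x) * indicator {a<..<t} x \<partial>lborel)"
  have subat: "{a<..<t} \<subseteq> openI R" using openI_down[OF t] a by auto
  have "is_interval {a<..<t}" by (auto simp: is_interval_1)
  from inv_phi_meas[OF q this subat]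
  have meas: "(\<lambda>x. ennreal (1/\<phi> x) * indicator {a<..<t} x) \<in> borel_measurable lborel" by simp
  have lowD: "ennreal (1/t) * (ennreal (\<phi> a / 4) * Ia) \<le> dstar R (Sphi \<phi> R g) t"
  proof -
    have "ennreal (\<phi> a / 4) * Ia = (\<integral>\<^sup>+ x. ennreal (\<phi> a / 4) * (ennreal (1/\<phi> x) * indicator {a<..<t} x) \<partial>lborel)"
      unfolding Ia_def by (rule nn_integral_cmult[OF meas, symmetric])
    also have "\<dots> \<le> (\<integral>\<^sup>+ x. rearr R (Sphi \<phi> R g) x * indicator {0<..<t} x \<partial>lborel)"
    proof (rule nn_integral_mono)
      fix x show "ennreal (\<phi> a / 4) * (ennreal (1/\<phi> x) * indicator {a<..<t} x) \<le> rearr R (Sphi \<phi> R g) x * indicator {0<..<t} x"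
      proof (cases "x \<in> {a<..<t}")
        case True
        then have xI: "x \<in> openI R" using subat by auto
        have px: "0 < \<phi> x" using qc_pos[OF q xI] .
        have "ennreal (\<phi> a / 4) * ennreal (1/\<phi> x) = ennreal (\<phi> a / (4 * \<phi> x))"
          using pa px by (simp add: ennreal_mult[symmetric])
        also have "\<dots> \<le> rearr R (Sphi \<phi> R g) x" using Sg_low2[OF xI] True by simp
        finally show ?thesis using True a by (simp add: indicator_def)
      qed simp
    qed
    finally show ?thesis unfolding dstar_def by (intro mult_left_mono) simp_all
  qed
  have upS: "Sphi \<phi> R (dstar R g) t \<le> ennreal (\<phi> a / \<phi> t)"
  proof -
    have "(SUP s\<in>{0<..<t}. ennreal (\<phi> s) * rearr R (dstar R g) s) \<le> ennreal (\<phi> a)"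
    proof (rule SUP_least)
      fix s assume s: "s \<in> {0<..<t}"
      have sI: "s \<in> openI R" using s openI_down[OF t] by auto
      have s0: "0 < s" using s by simp
      have ps: "0 < \<phi> s" using qc_pos[OF q sI] .
      have "rearr R (dstar R g) s \<le> dstar R g s" by (rule dstar_rearr_le[OF sI])
      also have "dstar R g s \<le> ennreal (1/s) * (\<integral>\<^sup>+ x. indicator {0<..<min s a} x \<partial>lborel)"
        unfolding dstar_def
      proof (intro mult_left_mono nn_integral_mono)
        fix x show "rearr R g x * indicator {0<..<s} x \<le> indicator {0<..<min s a} x"
        proof (cases "x \<in> {0<..<s}")
          case True
          show ?thesis
          proof (cases "x < a")
            case xa: True
            then show ?thesis using True gs1[of x] by (simp add: indicator_def)
          next
            case False
            then show ?thesis using True gs0[of x] by (simp add: indicator_def)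
          qed
        qed simp
      qed simp
      also have "\<dots> = ennreal (min s a / s)"
        using s0 a by (simp add: ennreal_mult[symmetric] mult.commute)
      finally have d: "rearr R (dstar R g) s \<le> ennreal (min s a / s)" .
      have real: "\<phi> s * (min s a / s) \<le> \<phi> a"
      proof (cases "s \<le> a")
        case True
        then show ?thesis using qc_mono[OF q sI aI] s0 by simp
      next
        case False
        have "\<phi> s * a \<le> \<phi> a * s" using qc_ratio[OF q aI sI] False by simp
        then show ?thesis using False s0 by (simp add: pos_divide_le_eq)
      qed
      have "ennreal (\<phi> s) * rearr R (dstar R g) s \<le> ennreal (\<phi> s) * ennreal (min s a / s)"
        using d by (rule mult_left_mono) simp
      also have "\<dots> = ennreal (\<phi> s * (min s a / s))" using ps s0 a by (simp add: ennreal_mult[symmetric])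
      also have "\<dots> \<le> ennreal (\<phi> a)" using real by (rule ennreal_leI)
      finally show "ennreal (\<phi> s) * rearr R (dstar R g) s \<le> ennreal (\<phi> a)" .
    qed
    then have "Sphi \<phi> R (dstar R g) t \<le> ennreal (1/\<phi> t) * ennreal (\<phi> a)"
      unfolding Sphi_def by (rule mult_left_mono) simp
    also have "\<dots> = ennreal (\<phi> a / \<phi> t)" using pa pt by (simp add: ennreal_mult[symmetric])
    finally show ?thesis .
  qed
  have "ennreal (1/t) * (ennreal (\<phi> a / 4) * Ia) \<le> ennreal C * Sphi \<phi> R (dstar R g) t"
    using lowD H fm t unfolding g_def by (meson order_trans)
  also have "\<dots> \<le> ennreal C * ennreal (\<phi> a / \<phi> t)" using upS by (rule mult_left_mono) simp
  finally have K: "ennreal (\<phi> a / 4) * (ennreal (1/t) * Ia) \<le> ennreal C * ennreal (\<phi> a / \<phi> t)"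
    by (simp add: ac_simps)
  have "ennreal (1/t) * Ia = ennreal (4 / \<phi> a) * (ennreal (\<phi> a / 4) * (ennreal (1/t) * Ia))"
  proof -
    have "ennreal (4 / \<phi> a) * ennreal (\<phi> a / 4) = 1" using pa by (simp add: ennreal_mult[symmetric])
    then show ?thesis by (simp add: mult.assoc[symmetric])
  qed
  also have "\<dots> \<le> ennreal (4 / \<phi> a) * (ennreal C * ennreal (\<phi> a / \<phi> t))"
    using K by (rule mult_left_mono) simp
  also have "\<dots> = ennreal (4 / \<phi> a * (C * (\<phi> a / \<phi> t)))"
    using pa pt C by (simp add: ennreal_mult[symmetric])
  also have "4 / \<phi> a * (C * (\<phi> a / \<phi> t)) = 4*C/\<phi> t" using pa by simp
  finally show ?thesis unfolding Ia_def .
qed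



lemma parti_rev:
  assumes q: "quasiconcave R \<phi>" and C: "0 < C"
    and H: "\<forall>f :: real \<Rightarrow> real. f \<in> borel_measurable (restrict_space lebesgue (openI R)) \<longrightarrow>
            (\<forall>t \<in> openI R. dstar R (Sphi \<phi> R (\<lambda>x. ennreal \<bar>f x\<bar>)) t \<le> ennreal C * Sphi \<phi> R (dstar R (\<lambda>x. ennreal \<bar>f x\<bar>)) t)"
  shows "B_condition R \<phi>"
  unfolding B_condition_def
proof (intro exI[of _ "4*C"] conjI ballI)
  show "0 < 4*C" using C by simp
  fix t assume t: "t \<in> openI R"
  have t0: "0 < t" using t by (simp add: openI_def)
  define F where "F = (\<lambda>n::nat. \<lambda>x. ennreal (1/\<phi> x) * indicator {t/(real n + 2)<..<t} x)"
  have Fm: "F n \<in> borel_measurable lborel" for n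
  proof -
    have pos: "0 < t/(real n + 2)" using t0 by simp
    have "{t/(real n + 2)<..<t} \<subseteq> openI R"
    proof
      fix x assume "x \<in> {t/(real n + 2)<..<t}"
      then have "0 < x" "x \<le> t" using pos by auto
      then show "x \<in> openI R" by (rule openI_down[OF t])
    qed
    moreover have "is_interval {t/(real n + 2)<..<t}" by (auto simp: is_interval_1)
    ultimately show ?thesis using inv_phi_meas[OF q] unfolding F_def by simp
  qed
  have inc: "incseq F"
  proof (rule incseq_SucI, rule le_funI)
    fix n x
    have "t/(real (Suc n) + 2) \<le> t/(real n + 2)" using t0 by (intro divide_left_mono) auto
    then show "F n x \<le> F (Suc n) x" unfolding F_def by (auto simp: indicator_def)
  qed
  have sup: "(SUP n. F n x) = ennreal (1/\<phi> x) * indicator {0<..<t} x" for x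
  proof (rule antisym)
    show "(SUP n. F n x) \<le> ennreal (1/\<phi> x) * indicator {0<..<t} x"
    proof (rule SUP_least)
      fix n have "0 < t/(real n + 2)" using t0 by simp
      then show "F n x \<le> ennreal (1/\<phi> x) * indicator {0<..<t} x" unfolding F_def by (auto simp: indicator_def)
    qed
    show "ennreal (1/\<phi> x) * indicator {0<..<t} x \<le> (SUP n. F n x)"
    proof (cases "x \<in> {0<..<t}")
      case True
      obtain n where n: "t/x < real n" using reals_Archimedean2 by blast
      have "t < x * real n" using n True by (simp add: field_simps)
      also have "\<dots> \<le> x * (real n + 2)" using True by (intro mult_left_mono) auto
      finally have "t/(real n + 2) < x" by (simp add: field_simps)
      then have "ennreal (1/\<phi> x) * indicator {0<..<t} x = F n x" using True unfolding F_def by (simp add: indicator_def)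
      also have "\<dots> \<le> (SUP n. F n x)" by (rule SUP_upper) simp
      finally show ?thesis .
    qed simp
  qed
  have "(\<integral>\<^sup>+ s\<in>{0<..<t}. ennreal (1/\<phi> s) \<partial>lborel) = (\<integral>\<^sup>+ x. (SUP n. F n x) \<partial>lborel)" by (simp add: sup)
  also have "\<dots> = (SUP n. \<integral>\<^sup>+ x. F n x \<partial>lborel)" by (rule nn_integral_monotone_convergence_SUP[OF inc Fm])
  finally have eq: "(\<integral>\<^sup>+ s\<in>{0<..<t}. ennreal (1/\<phi> s) \<partial>lborel) = (SUP n. \<integral>\<^sup>+ x. F n x \<partial>lborel)" .
  have "ennreal (1/t) * (SUP n. \<integral>\<^sup>+ x. F n x \<partial>lborel) = (SUP n. ennreal (1/t) * \<integral>\<^sup>+ x. F n x \<partial>lborel)"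
    by (rule SUP_mult_left_ennreal)
  also have "\<dots> \<le> ennreal (4*C/\<phi> t)"
  proof (rule SUP_least)
    fix n :: nat
    have a1: "0 < t/(real n + 2)" using t0 by simp
    have "t/(real n + 2) < t/1" using t0 by (intro divide_strict_left_mono) auto
    then have a2: "t/(real n + 2) < t" by simp
    show "ennreal (1/t) * (\<integral>\<^sup>+ x. F n x \<partial>lborel) \<le> ennreal (4*C/\<phi> t)"
      unfolding F_def by (rule parti_rev_a[OF q C H t a1 a2])
  qed
  finally show "ennreal (1 / t) * (\<integral>\<^sup>+ s \<in> {0<..<t}. ennreal (1 / \<phi> s) \<partial>lborel) \<le> ennreal (4*C / \<phi> t)"
    using eq by simp
qed

theorem lemma4p2:
  fixes R :: ereal and \<phi> :: "real \<Rightarrow> real"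
  assumes "0 < R" and "quasiconcave R \<phi>"
  shows "((\<exists>C>0. \<forall>f :: real \<Rightarrow> real. f \<in> borel_measurable (restrict_space lebesgue (openI R)) \<longrightarrow>
            (\<forall>t \<in> openI R.
               dstar R (Sphi \<phi> R (\<lambda>x. ennreal \<bar>f x\<bar>)) t
                 \<le> ennreal C * Sphi \<phi> R (dstar R (\<lambda>x. ennreal \<bar>f x\<bar>)) t))
          \<longleftrightarrow> B_condition R \<phi>)
       \<and> ((\<exists>C>0. \<forall>f :: real \<Rightarrow> real. f \<in> borel_measurable (restrict_space lebesgue (openI R)) \<longrightarrow>
            (\<forall>t \<in> openI R.
               Sphi \<phi> R (dstar R (\<lambda>x. ennreal \<bar>f x\<bar>)) t
                 \<le> ennreal C * Sphi \<phi> R (\<lambda>x. ennreal \<bar>f x\<bar>) t))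
          \<longleftrightarrow> B_condition R \<phi>)"
proof (intro conjI iffI)
  note q = assms(2)
  show "B_condition R \<phi>" if "\<exists>C>0. \<forall>f :: real \<Rightarrow> real. f \<in> borel_measurable (restrict_space lebesgue (openI R)) \<longrightarrow>
            (\<forall>t \<in> openI R.
               dstar R (Sphi \<phi> R (\<lambda>x. ennreal \<bar>f x\<bar>)) t
                 \<le> ennreal C * Sphi \<phi> R (dstar R (\<lambda>x. ennreal \<bar>f x\<bar>)) t)"
    using that parti_rev[OF q] by blast
  show "B_condition R \<phi>" if "\<exists>C>0. \<forall>f :: real \<Rightarrow> real. f \<in> borel_measurable (restrict_space lebesgue (openI R)) \<longrightarrow>
            (\<forall>t \<in> openI R.
               Sphi \<phi> R (dstar R (\<lambda>x. ennreal \<bar>f x\<bar>)) t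
                 \<le> ennreal C * Sphi \<phi> R (\<lambda>x. ennreal \<bar>f x\<bar>) t)"
    using that partii_rev[OF q] by blast
next
  note q = assms(2)
  assume "B_condition R \<phi>"
  then obtain C where C: "0 < C"
    and B: "\<forall>t \<in> openI R. ennreal (1 / t) * (\<integral>\<^sup>+ s \<in> {0<..<t}. ennreal (1 / \<phi> s) \<partial>lborel) \<le> ennreal (C / \<phi> t)"
    unfolding B_condition_def by blast
  show "\<exists>C>0. \<forall>f :: real \<Rightarrow> real. f \<in> borel_measurable (restrict_space lebesgue (openI R)) \<longrightarrow>
            (\<forall>t \<in> openI R.
               dstar R (Sphi \<phi> R (\<lambda>x. ennreal \<bar>f x\<bar>)) t
                 \<le> ennreal C * Sphi \<phi> R (dstar R (\<lambda>x. ennreal \<bar>f x\<bar>)) t)"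
    using C parti_fwd[OF q C B] by (intro exI[of _ "4*C"]) auto
next
  note q = assms(2)
  assume "B_condition R \<phi>"
  then obtain C where C: "0 < C"
    and B: "\<forall>t \<in> openI R. ennreal (1 / t) * (\<integral>\<^sup>+ s \<in> {0<..<t}. ennreal (1 / \<phi> s) \<partial>lborel) \<le> ennreal (C / \<phi> t)"
    unfolding B_condition_def by blast
  show "\<exists>C>0. \<forall>f :: real \<Rightarrow> real. f \<in> borel_measurable (restrict_space lebesgue (openI R)) \<longrightarrow>
            (\<forall>t \<in> openI R.
               Sphi \<phi> R (dstar R (\<lambda>x. ennreal \<bar>f x\<bar>)) t
                 \<le> ennreal C * Sphi \<phi> R (\<lambda>x. ennreal \<bar>f x\<bar>) t)"
    using C partii_fwd[OF q C B] by (intro exI[of _ C]) auto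
qed

end
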